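(* Let $G$ be an infinite group and $\vec m=(m_1,\dots,m_k)\in\mathbb{Z}^k$, $k\in\mathbb{N}$. Then (i) a subset $A\subseteq G$ is a Ramsey $\vec m$-product subset if and only if every infinite subset $X\subseteq G$ contains a countably infinite subset $Y$ such that $y_1^{m_1}y_2^{m_2}\cdots y_k^{m_k}\in A$ for all pairwise distinct $y_1,\dots,y_k\in Y$; (ii) the family $\varphi_{\vec m}$ of all Ramsey $\vec m$-product subsets of $G$ is a filter on $G$.
   Context: A subset $A$ of a group $G$ is a Ramsey $\vec m$-product subset, for $\vec m=(m_1,\dots,m_k)\in\mathbb{Z}^k$, if every infinite subset $X\subseteq G$ contains pairwise distinct $x_1,\dots,x_k\in X$ such that $x_{\sigma(1)}^{m_1}x_{\sigma(2)}^{m_2}\cdots x_{\sigma(k)}^{m_k}\in A$ for every permutation $\sigma\in S_k$. *)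

theory Defs
  imports "HOL-Algebra.Group" "HOL-Combinatorics.Permutations" "HOL-Library.Countable_Set"
begin

(* The word x_0^{m_0} x_1^{m_1} ... x_{k-1}^{m_{k-1}} in G, where k = length m
   (indices shifted to start at 0), with integer powers. *)
definition word_prod :: "('a, 'b) monoid_scheme \<Rightarrow> int list \<Rightarrow> (nat \<Rightarrow> 'a) \<Rightarrow> 'a" where
  "word_prod G m x =
     foldr (\<lambda>i acc. (x i [^]\<^bsub>G\<^esub> (m ! i)) \<otimes>\<^bsub>G\<^esub> acc) [0..<length m] \<one>\<^bsub>G\<^esub>"

definition ramsey_product :: "('a, 'b) monoid_scheme \<Rightarrow> int list \<Rightarrow> 'a set \<Rightarrow> bool" where
  "ramsey_product G m A \<longleftrightarrow> A \<subseteq> carrier G \<and>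
     (\<forall>X. X \<subseteq> carrier G \<longrightarrow> infinite X \<longrightarrow>
        (\<exists>x. inj_on x {..<length m} \<and> x ` {..<length m} \<subseteq> X \<and>
             (\<forall>\<sigma>. \<sigma> permutes {..<length m} \<longrightarrow> word_prod G m (x \<circ> \<sigma>) \<in> A)))"

definition filter_on_set :: "'a set \<Rightarrow> 'a set set \<Rightarrow> bool" where
  "filter_on_set S F \<longleftrightarrow> F \<subseteq> Pow S \<and> S \<in> F \<and> {} \<notin> F \<and>
     (\<forall>A\<in>F. \<forall>B\<in>F. A \<inter> B \<in> F) \<and>
     (\<forall>A\<in>F. \<forall>B. A \<subseteq> B \<and> B \<subseteq> S \<longrightarrow> B \<in> F)"

end

theory Submission
  imports Defs "HOL-Library.Ramsey"
begin

lemma word_prod_cong: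
  assumes "\<And>i. i < length m \<Longrightarrow> x i = y i"
  shows "word_prod G m x = word_prod G m y"
  unfolding word_prod_def
  by (rule foldr_cong) (auto simp: assms)

lemma foldr_closed:
  fixes m :: "int list"
  assumes "group G" "\<forall>i\<in>set xs. x i \<in> carrier G"
  shows "foldr (\<lambda>i acc. (x i [^]\<^bsub>G\<^esub> (m ! i)) \<otimes>\<^bsub>G\<^esub> acc) xs \<one>\<^bsub>G\<^esub> \<in> carrier G"
  using assms(2)
proof (induction xs)
  case Nil
  then show ?case using group.is_monoid[OF assms(1)] by (simp add: monoid.one_closed)
next
  case (Cons a xs)
  show ?case
  proof -
    have "x a \<in> carrier G" using Cons.prems by (meson list.set_intros(1))
    then have "x a [^]\<^bsub>G\<^esub> (m ! a) \<in> carrier G" by (rule group.int_pow_closed[OF assms(1)])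
    moreover have "foldr (\<lambda>i acc. (x i [^]\<^bsub>G\<^esub> (m ! i)) \<otimes>\<^bsub>G\<^esub> acc) xs \<one>\<^bsub>G\<^esub> \<in> carrier G"
      using Cons.IH Cons.prems by (meson list.set_intros(2))
    ultimately show ?case using monoid.m_closed[OF group.is_monoid[OF assms(1)]] by (simp only: foldr.simps o_apply)
  qed
qed

lemma word_prod_closed:
  assumes "group G" "x ` {..<length m} \<subseteq> carrier G"
  shows "word_prod G m x \<in> carrier G"
  unfolding word_prod_def
  using assms by (intro foldr_closed) auto

lemma perm_exists:
  assumes "inj_on x {..<k}" "inj_on y {..<k}" "y ` {..<k} = x ` {..<k}"
  shows "\<exists>\<sigma>. \<sigma> permutes {..<k} \<and> (\<forall>i<k. y i = x (\<sigma> i))"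
proof -
  define \<sigma> where "\<sigma> = (\<lambda>i. if i < k then inv_into {..<k} x (y i) else i)"
  have b1: "bij_betw y {..<k} (x ` {..<k})" using assms by (simp add: bij_betw_def)
  have b2: "bij_betw (inv_into {..<k} x) (x ` {..<k}) {..<k}"
    using assms(1) by (simp add: bij_betw_inv_into inj_on_imp_bij_betw)
  have "bij_betw (inv_into {..<k} x \<circ> y) {..<k} {..<k}"
    using b1 b2 by (rule bij_betw_trans)
  moreover have "\<forall>i\<in>{..<k}. (inv_into {..<k} x \<circ> y) i = \<sigma> i" by (simp add: \<sigma>_def)
  ultimately have "bij_betw \<sigma> {..<k} {..<k}"
    using bij_betw_cong[of "{..<k}" "inv_into {..<k} x \<circ> y" \<sigma> "{..<k}"] by blast
  then have "\<sigma> permutes {..<k}" by (rule bij_imp_permutes) (simp add: \<sigma>_def)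
  moreover have "\<forall>i<k. y i = x (\<sigma> i)"
  proof (intro allI impI)
    fix i assume "i < k"
    then have "y i \<in> x ` {..<k}" using assms(3) by blast
    then show "y i = x (\<sigma> i)" using \<open>i < k\<close> by (simp add: \<sigma>_def f_inv_into_f)
  qed
  ultimately show ?thesis by blast
qed

lemma exists_inj:
  assumes "infinite Y"
  shows "\<exists>x. inj_on x {..<(k::nat)} \<and> x ` {..<k} \<subseteq> Y"
proof -
  obtain f :: "nat \<Rightarrow> _" where "inj f" "range f \<subseteq> Y"
    using infinite_countable_subset[OF assms] by blast
  moreover have "inj_on f {..<k}" using \<open>inj f\<close> using inj_on_subset[OF \<open>inj f\<close>] by blast
  moreover have "f ` {..<k} \<subseteq> Y" using \<open>range f \<subseteq> Y\<close> by blast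
  ultimately show ?thesis by blast
qed

lemma part_i:
  assumes G: "group G" and AG: "A \<subseteq> carrier G"
  shows "ramsey_product G m A \<longleftrightarrow>
              (\<forall>X. X \<subseteq> carrier G \<longrightarrow> infinite X \<longrightarrow>
                 (\<exists>Y. Y \<subseteq> X \<and> countable Y \<and> infinite Y \<and>
                    (\<forall>y. inj_on y {..<length m} \<and> y ` {..<length m} \<subseteq> Y \<longrightarrow>
                         word_prod G m y \<in> A)))"
    (is "?L \<longleftrightarrow> ?R")
proof
  assume L: ?L
  show ?R
  proof (intro allI impI)
    fix X assume XG: "X \<subseteq> carrier G" and Xi: "infinite X"
    let ?k = "length m"
    define f where "f = (\<lambda>S. if (\<forall>y. inj_on y {..<?k} \<and> y ` {..<?k} = S \<longrightarrow> word_prod G m y \<in> A)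
                              then (1::nat) else 0)"
    have "\<forall>S. S \<subseteq> X \<and> finite S \<and> card S = ?k \<longrightarrow> f S < 2" by (simp add: f_def)
    from Ramsey[OF Xi this] obtain H t where H: "H \<subseteq> X" "infinite H" "t < 2"
      and hom: "\<forall>S. S \<subseteq> H \<and> finite S \<and> card S = ?k \<longrightarrow> f S = t" by blast
    have t1: "t = 1"
    proof (rule ccontr)
      assume "t \<noteq> 1"
      with H have t0: "t = 0" by simp
      have HG: "H \<subseteq> carrier G" using H(1) XG by (rule order_trans)
      from L have "\<forall>X. X \<subseteq> carrier G \<longrightarrow> infinite X \<longrightarrow>
        (\<exists>x. inj_on x {..<?k} \<and> x ` {..<?k} \<subseteq> X \<and>
             (\<forall>\<sigma>. \<sigma> permutes {..<?k} \<longrightarrow> word_prod G m (x \<circ> \<sigma>) \<in> A))"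
        unfolding ramsey_product_def by (rule conjunct2)
      from this[rule_format, OF HG H(2)] obtain x where x: "inj_on x {..<?k}" "x ` {..<?k} \<subseteq> H"
        and perm: "\<forall>\<sigma>. \<sigma> permutes {..<?k} \<longrightarrow> word_prod G m (x \<circ> \<sigma>) \<in> A"
        by blast
      have "card (x ` {..<?k}) = ?k" using x(1) by (simp add: card_image)
      have fin: "finite (x ` {..<?k})" by simp
      have "f (x ` {..<?k}) = t" using hom x(2) fin \<open>card (x ` {..<?k}) = ?k\<close> by blast
      then have "f (x ` {..<?k}) = 0" using t0 by simp
      then have "\<not> (\<forall>y. inj_on y {..<?k} \<and> y ` {..<?k} = x ` {..<?k} \<longrightarrow> word_prod G m y \<in> A)"
        unfolding f_def by (simp split: if_splits)
      then obtain y where y: "inj_on y {..<?k}" "y ` {..<?k} = x ` {..<?k}"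
        "word_prod G m y \<notin> A" by blast
      from perm_exists[OF x(1) y(1) y(2)] obtain \<sigma> where
        s: "\<sigma> permutes {..<?k}" and s2: "\<forall>i<?k. y i = x (\<sigma> i)" by blast
      from s2 have "word_prod G m y = word_prod G m (x \<circ> \<sigma>)"
        by (intro word_prod_cong) simp
      moreover have "word_prod G m (x \<circ> \<sigma>) \<in> A" using perm s by blast
      ultimately show False using y(3) by simp
    qed
    obtain Y where Y: "Y \<subseteq> H" "countable Y" "infinite Y"
      using infinite_countable_subset'[OF H(2)] by blast
    show "\<exists>Y. Y \<subseteq> X \<and> countable Y \<and> infinite Y \<and>
                    (\<forall>y. inj_on y {..<length m} \<and> y ` {..<length m} \<subseteq> Y \<longrightarrow>
                         word_prod G m y \<in> A)"
    proof (intro exI[of _ Y] conjI allI impI)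
      show "Y \<subseteq> X" using Y H by blast
      show "countable Y" "infinite Y" using Y by auto
      fix y assume y: "inj_on y {..<length m} \<and> y ` {..<length m} \<subseteq> Y"
      then have "card (y ` {..<?k}) = ?k" by (simp add: card_image)
      moreover have "y ` {..<?k} \<subseteq> H" using y Y(1) by blast
      moreover have "finite (y ` {..<?k})" by simp
      ultimately have "f (y ` {..<?k}) = t" using hom by blast
      then have "f (y ` {..<?k}) = 1" using t1 by simp
      then have "\<forall>z. inj_on z {..<?k} \<and> z ` {..<?k} = y ` {..<?k} \<longrightarrow> word_prod G m z \<in> A"
        unfolding f_def by (simp split: if_splits)
      then show "word_prod G m y \<in> A" using y by blast
    qed
  qed
next
  assume R: ?R
  show ?L
    unfolding ramsey_product_def
  proof (intro conjI AG allI impI)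
    fix X assume X: "X \<subseteq> carrier G" "infinite X"
    from R[rule_format, OF X] obtain Y where Y: "Y \<subseteq> X" "infinite Y"
      and W: "\<forall>y. inj_on y {..<length m} \<and> y ` {..<length m} \<subseteq> Y \<longrightarrow> word_prod G m y \<in> A"
      by blast
    obtain x where x: "inj_on x {..<length m}" "x ` {..<length m} \<subseteq> Y"
      using exists_inj[OF Y(2)] by blast
    show "\<exists>x. inj_on x {..<length m} \<and> x ` {..<length m} \<subseteq> X \<and>
             (\<forall>\<sigma>. \<sigma> permutes {..<length m} \<longrightarrow> word_prod G m (x \<circ> \<sigma>) \<in> A)"
    proof (intro exI[of _ x] conjI allI impI)
      show "inj_on x {..<length m}" by (rule x(1))
      show "x ` {..<length m} \<subseteq> X" using x Y by blast
      fix \<sigma> assume s: "\<sigma> permutes {..<length m}"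
      have "inj_on (x \<circ> \<sigma>) {..<length m}"
      proof -
        have im: "\<sigma> ` {..<length m} = {..<length m}" by (rule permutes_image[OF s])
        have "inj_on x (\<sigma> ` {..<length m})" using x(1) im by simp
        then show ?thesis by (rule comp_inj_on[OF permutes_inj_on[OF s]])
      qed
      moreover have "(x \<circ> \<sigma>) ` {..<length m} \<subseteq> Y"
      proof -
        have "(x \<circ> \<sigma>) ` {..<length m} = x ` {..<length m}" by (metis image_comp permutes_image s)
        then show ?thesis using x(2) by simp
      qed
      ultimately show "word_prod G m (x \<circ> \<sigma>) \<in> A" using W by blast
    qed
  qed
qed

theorem theorem5p1:
  fixes G (structure) and m :: "int list"
  assumes "group G" and "infinite (carrier G)"
  shows "(\<forall>A. A \<subseteq> carrier G \<longrightarrow>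
            (ramsey_product G m A \<longleftrightarrow>
              (\<forall>X. X \<subseteq> carrier G \<longrightarrow> infinite X \<longrightarrow>
                 (\<exists>Y. Y \<subseteq> X \<and> countable Y \<and> infinite Y \<and>
                    (\<forall>y. inj_on y {..<length m} \<and> y ` {..<length m} \<subseteq> Y \<longrightarrow>
                         word_prod G m y \<in> A)))))
         \<and> filter_on_set (carrier G) {A. ramsey_product G m A}"
proof (intro conjI allI impI)
  fix A assume "A \<subseteq> carrier G"
  then show "ramsey_product G m A \<longleftrightarrow>
              (\<forall>X. X \<subseteq> carrier G \<longrightarrow> infinite X \<longrightarrow>
                 (\<exists>Y. Y \<subseteq> X \<and> countable Y \<and> infinite Y \<and>
                    (\<forall>y. inj_on y {..<length m} \<and> y ` {..<length m} \<subseteq> Y \<longrightarrow>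
                         word_prod G m y \<in> A)))" by (rule part_i[OF assms(1)])
next
  note P = part_i[OF assms(1)]
  show "filter_on_set (carrier G) {A. ramsey_product G m A}"
    unfolding filter_on_set_def
  proof (intro conjI ballI allI impI)
    show "{A. ramsey_product G m A} \<subseteq> Pow (carrier G)"
      by (auto simp: ramsey_product_def)
    show "carrier G \<in> {A. ramsey_product G m A}"
      unfolding ramsey_product_def
    proof (safe)
      fix X assume "X \<subseteq> carrier G" "infinite X"
      then obtain x where x: "inj_on x {..<length m}" "x ` {..<length m} \<subseteq> X"
        using exists_inj by blast
      show "\<exists>x. inj_on x {..<length m} \<and> x ` {..<length m} \<subseteq> X \<and>
             (\<forall>\<sigma>. \<sigma> permutes {..<length m} \<longrightarrow> word_prod G m (x \<circ> \<sigma>) \<in> carrier G)"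
      proof (intro exI[of _ x] conjI allI impI x)
        fix \<sigma> assume s: "\<sigma> permutes {..<length m}"
        have "(x \<circ> \<sigma>) ` {..<length m} \<subseteq> carrier G"
        proof -
          have "(x \<circ> \<sigma>) ` {..<length m} = x ` {..<length m}" by (metis image_comp permutes_image s)
          then show ?thesis using x(2) \<open>X \<subseteq> carrier G\<close> by auto
        qed
        then show "word_prod G m (x \<circ> \<sigma>) \<in> carrier G"
          by (rule word_prod_closed[OF assms(1)])
      qed
    qed
    show "{} \<notin> {A. ramsey_product G m A}"
    proof
      assume "{} \<in> {A. ramsey_product G m A}"
      then have "ramsey_product G m {}" by simp
      then have "\<forall>X. X \<subseteq> carrier G \<longrightarrow> infinite X \<longrightarrow>
        (\<exists>x. inj_on x {..<length m} \<and> x ` {..<length m} \<subseteq> X \<and>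
             (\<forall>\<sigma>. \<sigma> permutes {..<length m} \<longrightarrow> word_prod G m (x \<circ> \<sigma>) \<in> {}))"
        unfolding ramsey_product_def by (rule conjunct2)
      from this[rule_format, OF order_refl assms(2)]
      obtain x where "\<forall>\<sigma>. \<sigma> permutes {..<length m} \<longrightarrow> word_prod G m (x \<circ> \<sigma>) \<in> {}"
        by blast
      then show False using permutes_id by blast
    qed
  next
    fix A B assume A: "A \<in> {A. ramsey_product G m A}" and B: "B \<in> {A. ramsey_product G m A}"
    have AG: "A \<subseteq> carrier G" and BG: "B \<subseteq> carrier G"
      using A B by (auto simp: ramsey_product_def)
    show "A \<inter> B \<in> {A. ramsey_product G m A}"
    proof (simp, rule P[THEN iffD2])
      show "A \<inter> B \<subseteq> carrier G" using AG by blast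
      show "\<forall>X. X \<subseteq> carrier G \<longrightarrow> infinite X \<longrightarrow>
                 (\<exists>Y. Y \<subseteq> X \<and> countable Y \<and> infinite Y \<and>
                    (\<forall>y. inj_on y {..<length m} \<and> y ` {..<length m} \<subseteq> Y \<longrightarrow>
                         word_prod G m y \<in> A \<inter> B))"
      proof (intro allI impI)
        fix X assume X: "X \<subseteq> carrier G" "infinite X"
        obtain Y where Y: "Y \<subseteq> X" "countable Y" "infinite Y"
          "\<forall>y. inj_on y {..<length m} \<and> y ` {..<length m} \<subseteq> Y \<longrightarrow> word_prod G m y \<in> A"
          using iffD1[OF P[OF AG] A[simplified], rule_format, OF X(1,2)] by blast
        obtain Z where Z: "Z \<subseteq> Y" "countable Z" "infinite Z"
          "\<forall>y. inj_on y {..<length m} \<and> y ` {..<length m} \<subseteq> Z \<longrightarrow> word_prod G m y \<in> B"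
          using iffD1[OF P[OF BG] B[simplified], rule_format, OF order_trans[OF Y(1) X(1)] Y(3)] by blast
        show "\<exists>Y. Y \<subseteq> X \<and> countable Y \<and> infinite Y \<and>
                    (\<forall>y. inj_on y {..<length m} \<and> y ` {..<length m} \<subseteq> Y \<longrightarrow>
                         word_prod G m y \<in> A \<inter> B)"
          using Y Z by (intro exI[of _ Z]) blast
      qed
    qed
  next
    fix A B assume A: "A \<in> {A. ramsey_product G m A}" and AB: "A \<subseteq> B \<and> B \<subseteq> carrier G"
    have RA: "\<forall>X. X \<subseteq> carrier G \<longrightarrow> infinite X \<longrightarrow>
        (\<exists>x. inj_on x {..<length m} \<and> x ` {..<length m} \<subseteq> X \<and>
             (\<forall>\<sigma>. \<sigma> permutes {..<length m} \<longrightarrow> word_prod G m (x \<circ> \<sigma>) \<in> A))"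
      using A unfolding ramsey_product_def by simp
    have "ramsey_product G m B"
      unfolding ramsey_product_def
    proof (intro conjI allI impI)
      show "B \<subseteq> carrier G" using AB by simp
      fix X assume X: "X \<subseteq> carrier G" "infinite X"
      from RA[rule_format, OF X] obtain x where x: "inj_on x {..<length m}" "x ` {..<length m} \<subseteq> X"
        "\<forall>\<sigma>. \<sigma> permutes {..<length m} \<longrightarrow> word_prod G m (x \<circ> \<sigma>) \<in> A" by blast
      show "\<exists>x. inj_on x {..<length m} \<and> x ` {..<length m} \<subseteq> X \<and>
             (\<forall>\<sigma>. \<sigma> permutes {..<length m} \<longrightarrow> word_prod G m (x \<circ> \<sigma>) \<in> B)"
      proof (intro exI[of _ x] conjI allI impI)
        show "inj_on x {..<length m}" by (rule x(1))
        show "x ` {..<length m} \<subseteq> X" by (rule x(2))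
        fix \<sigma> assume "\<sigma> permutes {..<length m}"
        then have "word_prod G m (x \<circ> \<sigma>) \<in> A" using x(3) by simp
        then show "word_prod G m (x \<circ> \<sigma>) \<in> B" using AB by (rule_tac subsetD) auto
      qed
    qed
    then show "B \<in> {A. ramsey_product G m A}" by simp
  qed
qed

end
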